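(* Let $q$ be a prime power, $l\ge1$, $t=q^l$, and $L_6=\{\alpha\in GF(t^2):\ \alpha^{t+1}+1\ne0\}=\{\alpha_1,\dots,\alpha_n\}$. For integers $e\ge0$, $s\ge1$ let $R(e,s)\in GF(t^2)^n$ be the row vector with $k$-th entry $\alpha_k^e/(\alpha_k^{t+1}+1)^s$ (with $0^0=1$). Let $f\in\{1,\dots,q-1\}$ and $c\in GF(q)^n$. If $c\cdot R(t-ft/q,\,1)=0$ and $c\cdot R((f-j)t+q-j,\,q-1)=0$ for all $j=1,\dots,f$, then $c\cdot R(ft/q+1,\,1)=0$. (That is, the row $R(ft/q+1,1)$ of the parity-check matrix is obtained, for $q$-ary codes, from the row $R(t-ft/q,1)$ and the auxiliary rows $R((f-j)t+q-j,q-1)$, $j=1,\dots,f$.)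
   Context: Here $u\cdot v=\sum_k u_kv_k$. In the paper these rows belong to parity-check matrices of the $q$-ary Goppa codes $\Gamma(L_6,(x^{t+1}+1)^j)$, which consist of $c\in GF(q)^n$ with $c\cdot R(e,s)=0$ for $1\le s\le j$, $0\le e\le t$. *)

theory Defs
  imports "HOL-Computational_Algebra.Primes" "HOL-Library.Cardinality"
begin

text \<open>The ambient field GF(t^2) is a finite field type 'a with CARD('a) = t^2.
  L6 = set of alpha with alpha^(t+1) + 1 \<noteq> 0.\<close>
definition L6 :: "nat \<Rightarrow> ('a::{field,finite}) set" where
  "L6 t = {\<alpha>. \<alpha> ^ (t + 1) + 1 \<noteq> 0}"

definition GFq :: "nat \<Rightarrow> ('a::{field,finite}) set" where
  "GFq q = {x. x ^ q = x}"

text \<open>Row vector R(e,s), indexed by k < n via an enumeration alpha of L6.\<close>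
definition Rrow :: "nat \<Rightarrow> (nat \<Rightarrow> 'a::{field,finite}) \<Rightarrow> nat \<Rightarrow> nat \<Rightarrow> nat \<Rightarrow> 'a" where
  "Rrow t \<alpha> e s k = \<alpha> k ^ e / (\<alpha> k ^ (t + 1) + 1) ^ s"

definition dotp :: "nat \<Rightarrow> (nat \<Rightarrow> 'a::comm_ring_1) \<Rightarrow> (nat \<Rightarrow> 'a) \<Rightarrow> 'a" where
  "dotp n u v = (\<Sum>k<n. u k * v k)"

end

theory Submission
  imports Defs "HOL-Number_Theory.Residues"
begin

lemma dotp_cong: "(\<And>k. k < n \<Longrightarrow> u k = v k) \<Longrightarrow> dotp n c u = dotp n c v"
  unfolding dotp_def by (rule sum.cong) auto

lemma dotp_add: "dotp n c (\<lambda>k. u k + v k) = dotp n c u + dotp n c v"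
  unfolding dotp_def by (simp add: distrib_left sum.distrib)

lemma char_facts:
  fixes q t :: nat
  assumes q_pp: "\<exists>p m. prime p \<and> m \<ge> 1 \<and> q = p ^ m"
    and t: "t = q ^ l"
    and card: "CARD('a::{field,finite}) = t ^ 2"
  shows "prime CHAR('a) \<and> (\<exists>m. q = CHAR('a) ^ m)"
proof -
  obtain p m where pm: "prime p" "m \<ge> 1" "q = p ^ m" using q_pp by blast
  have pos: "CHAR('a) > 0" by (rule finite_imp_CHAR_pos) simp
  have pc: "prime CHAR('a)" by (rule prime_CHAR_semidom[OF pos])
  have "CHAR('a) dvd CARD('a)" by (rule CHAR_dvd_CARD)
  hence "CHAR('a) dvd p ^ (m * l * 2)" using card t pm by (simp add: power_mult)
  hence "CHAR('a) dvd p" using pc prime_dvd_power by blast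
  hence "CHAR('a) = p" using pc pm(1) by (simp add: primes_dvd_imp_eq)
  thus ?thesis using pc pm by blast
qed

lemma frob_add:
  fixes x y :: "'a::{field,finite}"
  assumes "prime CHAR('a)" "q = CHAR('a) ^ m"
  shows "(x + y) ^ (q ^ i) = x ^ (q ^ i) + y ^ (q ^ i)"
  using assms by (intro freshmans_dream'[where n = "m * i"]) (auto simp: power_mult)

lemma dot_pow:
  fixes c :: "nat \<Rightarrow> 'a::{field,finite}"
  assumes "prime CHAR('a)" "q = CHAR('a) ^ m"
    and c: "\<forall>k<n. c k ^ q = c k"
  shows "(dotp n c v) ^ (q ^ i) = dotp n c (\<lambda>k. v k ^ (q ^ i))"
proof -
  have ci: "c k ^ (q ^ i) = c k" if "k < n" for k
  proof (induction i)
    case (Suc i)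
    have "c k ^ (q ^ Suc i) = (c k ^ q) ^ (q ^ i)"
      by (simp add: power_mult[symmetric] mult.commute)
    thus ?case using c that Suc by simp
  qed simp
  have "(dotp n c v) ^ (q ^ i) = (\<Sum>k<n. (c k * v k) ^ (q ^ i))"
    unfolding dotp_def using assms
    by (intro freshmans_dream_sum'[where n = "m * i"]) (auto simp: power_mult)
  also have "\<dots> = dotp n c (\<lambda>k. v k ^ (q ^ i))"
    unfolding dotp_def by (rule sum.cong) (auto simp: power_mult_distrib ci)
  finally show ?thesis .
qed

theorem lemma8:
  fixes q l t n f :: nat and \<alpha> :: "nat \<Rightarrow> 'a::{field,finite}" and c :: "nat \<Rightarrow> 'a"
  assumes q_pp: "\<exists>p m. prime p \<and> m \<ge> 1 \<and> q = p ^ m"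
    and l: "l \<ge> 1"
    and t: "t = q ^ l"
    and card: "CARD('a) = t ^ 2"
    and enum: "bij_betw \<alpha> {..<n} (L6 t)"
    and f: "1 \<le> f" "f \<le> q - 1"
    and c: "\<forall>k<n. c k \<in> GFq q"
    and h1: "dotp n c (Rrow t \<alpha> (t - f * t div q) 1) = 0"
    and h2: "\<forall>j\<in>{1..f}. dotp n c (Rrow t \<alpha> ((f - j) * t + q - j) (q - 1)) = 0"
  shows "dotp n c (Rrow t \<alpha> (f * t div q + 1) 1) = 0"
proof -
  obtain m where pc: "prime CHAR('a)" and qm: "q = CHAR('a) ^ m"
    using char_facts[OF q_pp t card] by blast
  have cq: "\<forall>k<n. c k ^ q = c k" using c by (simp add: GFq_def)
  note DP = dot_pow[OF pc qm cq]
  have q2: "q \<ge> 2" using f by linarith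
  define u where "u = q ^ (l - 1)"
  have tu: "t = q * u" using l t by (simp add: u_def power_Suc[symmetric])
  have ftq: "f * t div q = f * u" using tu q2 by simp
  have tqu: "t = q ^ l" by (fact t)
  define N where "N = (\<lambda>k. \<alpha> k ^ (t + 1) + 1)"
  have Nnz: "N k \<noteq> 0" if "k < n" for k
    using enum that unfolding bij_betw_def L6_def N_def by auto
  have finf: "(x::'a) ^ CARD('a) = x" for x
  proof (cases "x = 0")
    case False
    have "x * (\<Prod>y\<in>UNIV-{0}. x * y) = x * x ^ (CARD('a) - 1) * \<Prod>(UNIV-{0::'a})"
      by (simp add: prod.distrib mult_ac)
    also have "x * x ^ (CARD('a) - 1) = x ^ Suc (CARD('a) - 1)"
      by (subst power_Suc) auto
    also have "Suc (CARD('a) - 1) = CARD('a)"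
      using finite_UNIV_card_ge_0[where ?'a = 'a] by simp
    also have "(\<Prod>y\<in>UNIV-{0}. x * y) = (\<Prod>y\<in>UNIV-{0::'a}. y)"
      by (rule prod.reindex_bij_witness[of _ "\<lambda>y. y / x" "\<lambda>y. x * y"]) (use False in auto)
    finally show ?thesis by simp
  qed (use finite_UNIV_card_ge_0[where ?'a = 'a] in auto)
  have Nt: "N k ^ t = N k" for k
  proof -
    have "N k ^ (q ^ l) = (\<alpha> k ^ (t + 1)) ^ (q ^ l) + 1 ^ (q ^ l)"
      unfolding N_def by (rule frob_add[OF pc qm])
    also have "(\<alpha> k ^ (t + 1)) ^ (q ^ l) = \<alpha> k ^ (t * t) * \<alpha> k ^ t"
      by (simp add: t power_mult[symmetric] algebra_simps power_add)
    also have "\<alpha> k ^ (t * t) = \<alpha> k" using finf[of "\<alpha> k"] card by (simp add: power2_eq_square)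
    finally show ?thesis unfolding N_def t by (simp add: power_add mult.commute)
  qed
  define g where "g = (\<lambda>j k. \<alpha> k ^ ((f - j) * t + q - j) / N k ^ q)"
  have A: "dotp n c (g f) = 0"
  proof -
    have "(dotp n c (g f)) ^ (q ^ l) = dotp n c (\<lambda>k. g f k ^ (q ^ l))" by (rule DP)
    also have "\<dots> = dotp n c (\<lambda>k. Rrow t \<alpha> (t - f * t div q) 1 k ^ (q ^ 1))"
    proof (rule dotp_cong)
      fix k
      have "g f k ^ (q ^ l) = \<alpha> k ^ ((q - f) * t) / (N k ^ t) ^ q"
        unfolding g_def by (simp add: power_divide t[symmetric] power_mult[symmetric] mult.commute)
      also have "\<dots> = \<alpha> k ^ ((q - f) * t) / N k ^ q" by (simp add: Nt)
      also have "(q - f) * t = (t - f * t div q) * q"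
        using ftq tu by (simp add: algebra_simps diff_mult_distrib)
      finally show "g f k ^ (q ^ l) = Rrow t \<alpha> (t - f * t div q) 1 k ^ (q ^ 1)"
        by (simp add: Rrow_def N_def power_divide power_mult)
    qed
    also have "\<dots> = (dotp n c (Rrow t \<alpha> (t - f * t div q) 1)) ^ (q ^ 1)" by (rule DP[symmetric])
    finally have "(dotp n c (g f)) ^ (q ^ l) = 0" using h1 q2 by simp
    thus ?thesis by simp
  qed
  have B: "dotp n c (g (j - 1)) = - dotp n c (g j)" if j: "1 \<le> j" "j \<le> f" for j
  proof -
    have "dotp n c (Rrow t \<alpha> ((f - j) * t + q - j) (q - 1)) = dotp n c (\<lambda>k. g (j - 1) k + g j k)"
    proof (rule dotp_cong)
      fix k assume k: "k < n"
      let ?e = "(f - j) * t + q - j"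
      have e1: "(f - (j - 1)) * t + q - (j - 1) = ?e + (t + 1)"
      proof -
        obtain d where d: "f = j + d" using j by (metis le_add_diff_inverse)
        have "f - (j - 1) = Suc d" "f - j = d" using d j by auto
        thus ?thesis using j f d by (simp add: algebra_simps)
      qed
      have r: "Rrow t \<alpha> ?e (q - 1) k = \<alpha> k ^ ?e / N k ^ (q - 1)"
        unfolding Rrow_def N_def by simp
      have nq: "N k ^ q = N k ^ (q - 1) * N k" using q2
        by (metis Suc_diff_1 less_le_trans pos2 power_Suc2)
      have "Rrow t \<alpha> ?e (q - 1) k = \<alpha> k ^ ?e * N k / N k ^ q"
        unfolding r nq using Nnz[OF k] by simp
      also have "\<alpha> k ^ ?e * N k = \<alpha> k ^ (?e + (t + 1)) + \<alpha> k ^ ?e"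
        by (simp add: N_def power_add algebra_simps)
      finally show "Rrow t \<alpha> ?e (q - 1) k = g (j - 1) k + g j k"
        unfolding g_def e1 by (simp add: add_divide_distrib)
    qed
    thus ?thesis using h2 j by (simp add: dotp_add eq_neg_iff_add_eq_0)
  qed
  have C: "dotp n c (g (f - i)) = 0" if "i \<le> f" for i
    using that
  proof (induction i)
    case 0 thus ?case using A by simp
  next
    case (Suc i)
    have "dotp n c (g (f - i - 1)) = - dotp n c (g (f - i))"
      using B[of "f - i"] Suc.prems by simp
    thus ?case using Suc by simp
  qed
  have C0: "dotp n c (g 0) = 0" using C[of f] by simp
  have "(dotp n c (Rrow t \<alpha> (f * t div q + 1) 1)) ^ (q ^ 1)
        = dotp n c (\<lambda>k. Rrow t \<alpha> (f * t div q + 1) 1 k ^ (q ^ 1))" by (rule DP)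
  also have "\<dots> = dotp n c (g 0)"
  proof (rule dotp_cong)
    fix k
    have e: "(f * t div q + 1) * q = f * t + q" using ftq tu by (simp add: algebra_simps)
    have "Rrow t \<alpha> (f * t div q + 1) 1 k ^ (q ^ 1) = \<alpha> k ^ ((f * t div q + 1) * q) / N k ^ q"
      unfolding Rrow_def N_def by (simp only: power_one_right power_divide power_mult)
    thus "Rrow t \<alpha> (f * t div q + 1) 1 k ^ (q ^ 1) = g 0 k"
      unfolding g_def e by simp
  qed
  finally show ?thesis using C0 q2 by simp
qed

end
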